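(* Suppose that for some $T<\infty$, real-valued observations $X_1,\ldots,X_T$ are drawn i.i.d. from a known distribution with CDF $F_0$, and $X_{T+1},X_{T+2},\ldots$ are drawn i.i.d. from an unknown distribution with CDF $F_1\ne F_0$, independently. Let $\Delta:=d_{\mathrm{KS}}(F_1,F_0)$. Then the BCS-Detector instantiated with the Kolmogorov–Smirnov confidence sequence described below satisfies $$\mathbb{E}_T[(\tau-T)^+]=\mathcal{O}\!\left(\frac{\log\log(1/\Delta)+\log(1/\alpha)}{\Delta^2}\right).$$
   Context: $\Theta$ is the set of all CDFs on $\mathbb{R}$ with the Kolmogorov–Smirnov metric $d_{\mathrm{KS}}(F,G)=\sup_{x\in\mathbb{R}}|F(x)-G(x)|$. The forward confidence sequence is $C_t=\{\theta\in\Theta: d_{\mathrm{KS}}(\theta,\widehat\theta_t)\le w_t/2\}$, where $\widehat\theta_t$ is the empirical CDF of $X_1,\ldots,X_t$ and $w_t=1.7\sqrt{(\log\log(et)+0.8\log(1612/\alpha))/t}$, made nested by running intersections; for each $n$ the backward confidence sequence $\{B^{(n)}_t\}_{t\in[n]}$ is the same construction applied to the reversed data, so $B^{(n)}_t$ uses $X_t,\ldots,X_n$, nested. The BCS-Detector stops at $\tau=\inf\{n\ge1: C_n\cap B^{(n)}_1=\emptyset\}$. Knowledge of $F_0$ means the forward sets contain $F_0$ before the change with probability one. $\mathbb{E}_T$ denotes expectation when the change occurs at $T$; $\mathcal{O}$ hides absolute constants. *)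

theory Defs
  imports "HOL-Probability.Probability"
begin

definition dKS :: "(real \<Rightarrow> real) \<Rightarrow> (real \<Rightarrow> real) \<Rightarrow> real" where
  "dKS F G = (SUP x. \<bar>F x - G x\<bar>)"

text \<open>Empirical CDF of the observations X_a, ..., X_b (1-indexed, a \<le> b);
  the observation X_k is the coordinate \<omega> k of the sample path.\<close>
definition ecdf :: "(nat \<Rightarrow> real) \<Rightarrow> nat \<Rightarrow> nat \<Rightarrow> real \<Rightarrow> real" where
  "ecdf \<omega> a b = (\<lambda>x. real (card {i \<in> {a..b}. \<omega> i \<le> x}) / real (b + 1 - a))"

definition ks_width :: "real \<Rightarrow> nat \<Rightarrow> real" where
  "ks_width \<alpha> t = 1.7 * sqrt ((ln (ln (exp 1 * real t)) + 0.8 * ln (1612 / \<alpha>)) / real t)"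

text \<open>Backward confidence set B^(n)_1: the running intersection over t = 1..n of the
  KS balls around the empirical CDF of X_t, ..., X_n (which are the first n - t + 1
  points of the reversed data X_n, X_(n-1), ...).\<close>
definition back_cs :: "real \<Rightarrow> (nat \<Rightarrow> real) \<Rightarrow> nat \<Rightarrow> (real \<Rightarrow> real) set" where
  "back_cs \<alpha> \<omega> n = (\<Inter>t\<in>{1..n}. {\<theta>. dKS \<theta> (ecdf \<omega> t n) \<le> ks_width \<alpha> (n + 1 - t) / 2})"

text \<open>Forward confidence sets when F0 is known: C_n = {F0} for all n.
  The detector stops at the first n \<ge> 1 with C_n \<inter> B^(n)_1 = {}.\<close>
definition detects :: "real \<Rightarrow> (real \<Rightarrow> real) \<Rightarrow> (nat \<Rightarrow> real) \<Rightarrow> nat \<Rightarrow> bool" where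
  "detects \<alpha> F0 \<omega> n \<longleftrightarrow> 1 \<le> n \<and> {F0} \<inter> back_cs \<alpha> \<omega> n = {}"

text \<open>Positive part of the detection delay, (\<tau> - T)^+, with value \<infinity> if \<tau> = \<infinity>.\<close>
definition delay :: "real \<Rightarrow> (real \<Rightarrow> real) \<Rightarrow> nat \<Rightarrow> (nat \<Rightarrow> real) \<Rightarrow> ennreal" where
  "delay \<alpha> F0 T \<omega> =
     (if \<exists>n. detects \<alpha> F0 \<omega> n
      then ennreal (real ((LEAST n. detects \<alpha> F0 \<omega> n) - T))
      else \<infinity>)"

text \<open>Law of the sample path when the change occurs at T: X_1..X_T iid M0, X_(T+1),...
  iid M1, all independent (coordinate 0 is an unused dummy).\<close>
definition change_law :: "real measure \<Rightarrow> real measure \<Rightarrow> nat \<Rightarrow> (nat \<Rightarrow> real) measure" where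
  "change_law M0 M1 T = (\<Pi>\<^sub>M i\<in>(UNIV::nat set). (if i \<le> T then M0 else M1))"

end

theory Submission
  imports Defs
begin


lemma change_law_prob:
  assumes "prob_space M0" "prob_space M1"
  shows "product_prob_space (\<lambda>i. if i \<le> T then M0 else M1)"
  unfolding product_prob_space_def product_sigma_finite_def product_prob_space_axioms_def
  using assms by (auto simp: prob_space_imp_sigma_finite)

lemma indep_coords:
  assumes "product_prob_space M" "finite J" "J \<noteq> {}"
  shows "prob_space.indep_vars (PiM UNIV M) M (\<lambda>i \<omega>. \<omega> i) J"
proof -
  interpret product_prob_space M UNIV by fact
  interpret P: prob_space "PiM UNIV M" by (rule prob_space_PiM) (simp add: M.prob_space_axioms)
  show ?thesis
  proof (subst P.indep_vars_iff_distr_eq_PiM)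
    show "distr (PiM UNIV M) (PiM J M) (\<lambda>x. \<lambda>i\<in>J. x i) = PiM J (\<lambda>i. distr (PiM UNIV M) (M i) (\<lambda>\<omega>. \<omega> i))"
      using distr_PiM_restrict_finite[of J] assms
      by (simp add: PiM_component cong: PiM_cong)
  qed (use assms in auto)
qed

lemma hoeff:
  assumes rd: "real_distribution M0" "real_distribution M1" and k: "1 \<le> k" and e: "0 \<le> e"
  shows "measure (change_law M0 M1 T) {\<omega> \<in> space (change_law M0 M1 T).
     e \<le> \<bar>(\<Sum>i\<in>{T+1..T+k}. indicator {..x0} (\<omega> i)) - real k * cdf M1 x0\<bar>} \<le> 2 * exp (-2 * e\<^sup>2 / real k)"
proof -
  define MM where "MM = (\<lambda>i::nat. if i \<le> T then M0 else M1)"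
  have pps: "product_prob_space MM" unfolding MM_def
    by (rule change_law_prob) (use rd in \<open>auto simp: real_distribution_def\<close>)
  interpret pps: product_prob_space MM UNIV by (rule pps)
  have CL: "change_law M0 M1 T = PiM UNIV MM" unfolding change_law_def MM_def by simp
  define I where "I = {T+1..T+k}"
  have I: "finite I" "I \<noteq> {}" using k by (auto simp: I_def)
  have sb: "sets (MM i) = sets borel" for i using rd unfolding MM_def
    by (auto simp: real_distribution_def real_distribution_axioms_def)
  have mi: "(indicator {..x0} :: real \<Rightarrow> real) \<in> borel_measurable (MM i)" for i
    by (subst measurable_cong_sets[OF sb refl]) simp
  have ind0: "pps.P.indep_vars MM (\<lambda>i \<omega>. \<omega> i) I" by (rule indep_coords[OF pps I])
  have ind: "pps.P.indep_vars (\<lambda>_. borel) (\<lambda>i \<omega>. indicator {..x0} (\<omega> i) :: real) I"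
    by (rule pps.P.indep_vars_compose2[OF ind0]) (rule mi)
  interpret H: Hoeffding_ineq "PiM UNIV MM" I "\<lambda>i \<omega>. indicator {..x0} (\<omega> i) :: real" "\<lambda>_. 0" "\<lambda>_. 1"
     "\<Sum>i\<in>I. pps.P.expectation (\<lambda>\<omega>. indicator {..x0} (\<omega> i) :: real)"
    by unfold_locales (use I ind in \<open>auto simp: indicator_def\<close>)
  have exp1: "pps.P.expectation (\<lambda>\<omega>. indicator {..x0} (\<omega> i) :: real) = cdf M1 x0" if "i \<in> I" for i
  proof -
    have "pps.P.expectation (\<lambda>\<omega>. indicator {..x0} (\<omega> i) :: real) = 
       integral\<^sup>L (distr (PiM UNIV MM) (MM i) (\<lambda>\<omega>. \<omega> i)) (indicator {..x0})"
      by (subst integral_distr) (auto simp: mi)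
    also have "\<dots> = integral\<^sup>L (MM i) (indicator {..x0})"
      by (simp add: pps.PiM_component)
    also have "\<dots> = integral\<^sup>L M1 (indicator {..x0})" using that by (simp add: MM_def I_def)
    also have "\<dots> = cdf M1 x0"
      using rd by (simp add: cdf_def real_distribution_def real_distribution_axioms_def sets_eq_imp_space_eq)
    finally show ?thesis .
  qed
  have mu: "(\<Sum>i\<in>I. pps.P.expectation (\<lambda>\<omega>. indicator {..x0} (\<omega> i) :: real)) = real k * cdf M1 x0"
    using exp1 by (simp add: I_def)
  have sq: "(\<Sum>i\<in>I. (1 - 0::real)\<^sup>2) = real k" by (simp add: I_def)
  show ?thesis
    using H.Hoeffding_ineq_abs_ge[OF e] unfolding CL mu sq I_def[symmetric] using k by simp
qed



lemma ln1612: "ln (1612::real) \<le> 11"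
proof -
  have "ln (1612::real) \<le> ln (2^11)" by simp
  also have "\<dots> = 11 * ln 2" using ln_realpow[of "2::real" 11] by simp
  finally show ?thesis using ln_2_less_1 by simp
qed

lemma width_small:
  fixes \<Delta> \<alpha> :: real and k :: nat
  assumes D: "0 < \<Delta>" "\<Delta> \<le> 1" and a: "0 < \<alpha>" "\<alpha> < 1"
  and kb: "2500 * (1 + ln (ln (exp 1 / \<Delta>)) + ln (1/\<alpha>)) / \<Delta>\<^sup>2 \<le> real k"
  shows "ks_width \<alpha> k \<le> \<Delta>/2"
proof -
  define m where "m = ln (exp 1 / \<Delta>)"
  define L where "L = 1 + ln m + ln (1/\<alpha>)"
  define u where "u = real k * \<Delta>\<^sup>2"
  have m: "m = 1 - ln \<Delta>" using D by (simp add: m_def ln_div)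
  have lnD: "ln \<Delta> \<le> 0" using D by simp
  have m1: "m \<ge> 1" using m lnD by simp
  have lnm: "ln m \<ge> 0" using m1 by simp
  have la: "ln (1/\<alpha>) > 0" using a by simp
  have L1: "L \<ge> 1" using lnm la by (simp add: L_def)
  have D2: "\<Delta>\<^sup>2 > 0" using D by simp
  have uL: "u \<ge> 2500 * L" using kb D2 unfolding u_def L_def m_def by (simp add: field_simps)
  have u: "u \<ge> 2500" using uL L1 by simp
  have kpos: "real k > 0" using u unfolding u_def by (cases "k = 0") auto
  have lnk: "ln (real k) = ln u - 2 * ln \<Delta>" using kpos D
    by (simp add: u_def ln_mult ln_realpow)
  have lek: "ln (exp 1 * real k) = ln u + 2 * m - 1" using kpos lnk m by (simp add: ln_mult)
  have lnu: "ln u \<ge> 0" using u by simp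
  have ek1: "ln (exp 1 * real k) \<le> 2 * m * (ln u + 1)"
    proof -
    have "ln u \<le> 2*m*ln u" using mult_right_mono[of 1 "2*m" "ln u"] m1 lnu by simp
    moreover have "2*m*(ln u + 1) = 2*m*ln u + 2*m" by (simp add: algebra_simps)
    ultimately show ?thesis using lek by linarith
  qed
  have ekpos: "ln (exp 1 * real k) > 0" using lek lnu m1 by simp
  have "ln (ln (exp 1 * real k)) \<le> ln (2 * m * (ln u + 1))"
    using ek1 ekpos by simp
  also have "\<dots> = ln 2 + ln m + ln (1 + ln u)" using m1 lnu by (simp add: ln_mult add.commute)
  also have "\<dots> \<le> 1 + ln m + ln u" using ln_2_less_1 ln_add_one_self_le_self[OF lnu] by simp
  finally have ll: "ln (ln (exp 1 * real k)) \<le> 1 + ln m + ln u" .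
  have su: "sqrt u \<ge> 50" using u real_sqrt_le_mono[of 2500 u] by simp
  have "ln u = 2 * ln (sqrt u)" using u by (simp add: ln_sqrt)
  also have "\<dots> \<le> 2 * sqrt u" using ln_le_minus_one[of "sqrt u"] su u by simp
  finally have lu: "ln u \<le> 2 * sqrt u" .
  have "2 * sqrt u * 50 \<le> 2 * sqrt u * sqrt u" by (rule mult_left_mono) (use su u in auto)
  also have "\<dots> = 2 * u" using u by simp
  finally have su2: "2 * sqrt u \<le> u / 25" by simp
  have l1612: "ln (1612 / \<alpha>) = ln 1612 + ln (1/\<alpha>)" using a by (simp add: ln_div)
  define N where "N = ln (ln (exp 1 * real k)) + 0.8 * ln (1612 / \<alpha>)"
  have "N \<le> 1 + ln m + 2 * sqrt u + 8.8 + 0.8 * ln (1/\<alpha>)"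
    proof -
    have "0.8 * ln (1612 / \<alpha>) \<le> 8.8 + 0.8 * ln (1/\<alpha>)" using l1612 ln1612 by simp
    then show ?thesis unfolding N_def using ll lu by linarith
  qed
  also have "\<dots> \<le> 2 * sqrt u + 10 * L" unfolding L_def using lnm la by simp
  also have "\<dots> \<le> u / 25 + u / 250" using su2 uL by simp
  finally have N: "N \<le> 11 * u / 250" by simp
  have "N / real k \<le> (11 * u / 250) / real k" by (rule divide_right_mono) (use N kpos in auto)
  also have "\<dots> = 11 * \<Delta>\<^sup>2 / 250" using kpos by (simp add: u_def)
  also have "\<dots> \<le> (\<Delta> / 3.4)\<^sup>2" by (simp add: power_divide)
  finally have "sqrt (N / real k) \<le> sqrt ((\<Delta> / 3.4)\<^sup>2)" by (rule real_sqrt_le_mono)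
  also have "\<dots> = \<Delta> / 3.4" using D by simp
  finally show ?thesis unfolding ks_width_def N_def[symmetric] by simp
qed



lemma dKS_ge:
  assumes "\<And>x. \<bar>F x - G x\<bar> \<le> c"
  shows "\<bar>F x - G x\<bar> \<le> dKS F G"
  unfolding dKS_def by (rule cSUP_upper) (use assms in \<open>auto intro!: bdd_aboveI2\<close>)

lemma dKS_le:
  assumes "\<And>x. \<bar>F x - G x\<bar> \<le> c"
  shows "dKS F G \<le> c"
  unfolding dKS_def by (rule cSUP_least) (use assms in auto)

lemma card_filter_sum:
  "finite I \<Longrightarrow> real (card {i \<in> I. \<omega> i \<le> x0}) = (\<Sum>i\<in>I. indicator {..x0} (\<omega> i))"
proof -
  assume f: "finite I"
  have "real (card {i \<in> I. \<omega> i \<le> x0}) = (\<Sum>i\<in>{i \<in> I. \<omega> i \<le> x0}. 1)" by simp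
  also have "\<dots> = (\<Sum>i\<in>I. if \<omega> i \<le> x0 then 1 else 0)" using f by (rule sum.inter_filter)
  also have "\<dots> = (\<Sum>i\<in>I. indicator {..x0} (\<omega> i))" by (intro sum.cong) (auto simp: indicator_def)
  finally show ?thesis .
qed

lemma ecdf_bounds: "0 \<le> ecdf \<omega> a b x \<and> ecdf \<omega> a b x \<le> 1"
proof -
  have "card {i \<in> {a..b}. \<omega> i \<le> x} \<le> card {a..b}" by (rule card_mono) auto
  then have "card {i \<in> {a..b}. \<omega> i \<le> x} \<le> b + 1 - a" by simp
  then show ?thesis unfolding ecdf_def
    by (cases "b + 1 - a = 0") (auto simp: divide_le_eq_1)
qed

lemma detect_lemma:
  fixes F0 F1 :: "real \<Rightarrow> real"
  assumes F0: "\<And>x. 0 \<le> F0 x \<and> F0 x \<le> 1"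
  and k: "1 \<le> k" and w: "ks_width \<alpha> k \<le> g"
  and dev: "\<bar>(\<Sum>i\<in>{T+1..T+k}. indicator {..x0} (\<omega> i)) - real k * F1 x0\<bar> < real k * g / 2"
  and g: "g \<le> \<bar>F1 x0 - F0 x0\<bar>"
  shows "detects \<alpha> F0 \<omega> (T + k)"
proof -
  define E where "E = ecdf \<omega> (T+1) (T+k)"
  have Ex: "E x0 = (\<Sum>i\<in>{T+1..T+k}. indicator {..x0} (\<omega> i)) / real k"
    unfolding E_def ecdf_def by (subst card_filter_sum) auto
  have kp: "real k > 0" using k by simp
  have "\<bar>E x0 - F1 x0\<bar> < g / 2"
  proof -
    have "\<bar>E x0 - F1 x0\<bar> = \<bar>(\<Sum>i\<in>{T+1..T+k}. indicator {..x0} (\<omega> i)) - real k * F1 x0\<bar> / real k"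
      unfolding Ex using kp by (simp add: field_simps)
    also have "\<dots> < (real k * g / 2) / real k" by (rule divide_strict_right_mono) (use dev kp in auto)
    finally show ?thesis using kp by simp
  qed
  then have "\<bar>F0 x0 - E x0\<bar> > g / 2" using g by linarith
  moreover have "\<bar>F0 x0 - E x0\<bar> \<le> dKS F0 E"
  proof (rule dKS_ge[where c=2])
    fix x
    show "\<bar>F0 x - E x\<bar> \<le> 2" using F0[of x] ecdf_bounds[of \<omega> "T+1" "T+k" x] unfolding E_def by linarith
  qed
  ultimately have "dKS F0 E > ks_width \<alpha> k / 2" using w by linarith
  then have "F0 \<notin> back_cs \<alpha> \<omega> (T + k)"
    unfolding back_cs_def E_def using k by (auto intro!: bexI[of _ "T+1"])
  then show ?thesis unfolding detects_def using k by auto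
qed

theorem corollary3:
  shows "\<exists>C>0. \<forall>M0 M1 (T::nat) (\<alpha>::real).
     real_distribution M0 \<and> real_distribution M1 \<and> cdf M1 \<noteq> cdf M0 \<and> 0 < \<alpha> \<and> \<alpha> < 1 \<longrightarrow>
     (let \<Delta> = dKS (cdf M1) (cdf M0) in
       (\<integral>\<^sup>+ \<omega>. delay \<alpha> (cdf M0) T \<omega> \<partial>change_law M0 M1 T)
         \<le> ennreal (C * (1 + ln (ln (exp 1 / \<Delta>)) + ln (1 / \<alpha>)) / \<Delta>\<^sup>2))"
proof (intro exI[of _ 2519] conjI allI impI)
  show "(0::real) < 2519" by simp
  fix M0 M1 :: "real measure" and T :: nat and \<alpha> :: real
  assume H: "real_distribution M0 \<and> real_distribution M1 \<and> cdf M1 \<noteq> cdf M0 \<and> 0 < \<alpha> \<and> \<alpha> < 1"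
  then have rd0: "real_distribution M0" and rd1: "real_distribution M1" and neq: "cdf M1 \<noteq> cdf M0"
    and a0: "0 < \<alpha>" and a1: "\<alpha> < 1" by auto
  interpret R0: real_distribution M0 by (rule rd0)
  interpret R1: real_distribution M1 by (rule rd1)
  define F0 where "F0 = cdf M0"
  define F1 where "F1 = cdf M1"
  define \<Delta> where "\<Delta> = dKS F1 F0"
  have F0b: "0 \<le> F0 x \<and> F0 x \<le> 1" for x
    unfolding F0_def using R0.cdf_nonneg R0.cdf_bounded_prob by auto
  have F1b: "0 \<le> F1 x \<and> F1 x \<le> 1" for x
    unfolding F1_def using R1.cdf_nonneg R1.cdf_bounded_prob by auto
  have db: "\<bar>F1 x - F0 x\<bar> \<le> 1" for x using F0b[of x] F1b[of x] by linarith
  have D1: "\<Delta> \<le> 1" unfolding \<Delta>_def by (rule dKS_le[OF db])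
  obtain x1 where "F1 x1 \<noteq> F0 x1" using neq unfolding F0_def F1_def by (auto simp: fun_eq_iff)
  then have D0: "\<Delta> > 0" using dKS_ge[where F=F1 and G=F0 and c=1 and x=x1, OF db] unfolding \<Delta>_def by linarith
  obtain x0 where gx: "\<bar>F1 x0 - F0 x0\<bar> > \<Delta> / 2"
  proof (rule ccontr)
    assume "\<not> thesis"
    then have "\<bar>F1 x - F0 x\<bar> \<le> \<Delta> / 2" for x using that by (meson not_le)
    then have "\<Delta> \<le> \<Delta> / 2" unfolding \<Delta>_def by (rule dKS_le)
    then show False using D0 by simp
  qed
  define g where "g = \<bar>F1 x0 - F0 x0\<bar>"
  have g: "\<Delta> / 2 \<le> g" using gx by (simp add: g_def)
  define L where "L = 1 + ln (ln (exp 1 / \<Delta>)) + ln (1 / \<alpha>)"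
  have lnD: "ln (exp 1 / \<Delta>) = 1 - ln \<Delta>" using D0 by (simp add: ln_div)
  have "ln \<Delta> \<le> 0" using D0 D1 by simp
  then have "ln (ln (exp 1 / \<Delta>)) \<ge> 0" unfolding lnD by simp
  moreover have "ln (1/\<alpha>) > 0" using a0 a1 by simp
  ultimately have L1: "L \<ge> 1" unfolding L_def by simp
  have D2: "\<Delta>\<^sup>2 > 0" using D0 by simp
  define K0 where "K0 = nat \<lceil>2500 * L / \<Delta>\<^sup>2\<rceil>"
  have K0ge: "real K0 \<ge> 2500 * L / \<Delta>\<^sup>2" unfolding K0_def by linarith
  have K0le: "real K0 \<le> 2500 * L / \<Delta>\<^sup>2 + 1" unfolding K0_def
    using L1 D2 by (simp add: of_nat_nat)
  have "2500 * L / \<Delta>\<^sup>2 > 0" using L1 D2 by simp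
  then have K01: "K0 \<ge> 1" using K0ge by linarith
  define P where "P = change_law M0 M1 T"
  define S where "S = (\<lambda>k \<omega>. \<Sum>i\<in>{T+1..T+k}. indicator {..x0} (\<omega> i) :: real)"
  define A where "A = (\<lambda>k. {\<omega> \<in> space P. real k * g / 2 \<le> \<bar>S k \<omega> - real k * F1 x0\<bar>})"
  have det: "detects \<alpha> F0 \<omega> (T + (K0 + j))" if "\<omega> \<in> space P" "\<omega> \<notin> A (K0 + j)" for \<omega> j
  proof (rule detect_lemma[OF F0b])
    show "1 \<le> K0 + j" using K01 by simp
    have "2500 * (1 + ln (ln (exp 1 / \<Delta>)) + ln (1/\<alpha>)) / \<Delta>\<^sup>2 \<le> real (K0 + j)"
      using K0ge unfolding L_def by simp
    then have "ks_width \<alpha> (K0 + j) \<le> \<Delta> / 2" by (rule width_small[OF D0 D1 a0 a1])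
    then show "ks_width \<alpha> (K0 + j) \<le> g" using g by simp
    show "\<bar>(\<Sum>i\<in>{T+1..T+(K0+j)}. indicator {..x0} (\<omega> i)) - real (K0+j) * F1 x0\<bar> < real (K0+j) * g / 2"
      using that unfolding A_def S_def by auto
    show "g \<le> \<bar>F1 x0 - F0 x0\<bar>" by (simp add: g_def)
  qed
  have PP: "prob_space P" unfolding P_def change_law_def
    by (rule prob_space_PiM) (use rd0 rd1 in \<open>auto simp: real_distribution_def\<close>)
  interpret PP: prob_space P by (rule PP)
  have sb: "sets (if i \<le> T then M0 else M1) = sets borel" for i
    using rd0 rd1 by (auto simp: real_distribution_def real_distribution_axioms_def)
  have comp: "(\<lambda>\<omega>. \<omega> i) \<in> measurable P borel" for i
  proof -
    have "(\<lambda>\<omega>. \<omega> i) \<in> measurable P (if i \<le> T then M0 else M1)"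
      unfolding P_def change_law_def by (rule measurable_component_singleton) simp
    then show ?thesis by (subst (asm) measurable_cong_sets[OF refl sb])
  qed
  have ind_m[measurable]: "(\<lambda>\<omega>. indicator {..x0} (\<omega> i) :: real) \<in> borel_measurable P" for i
    by (rule measurable_compose[OF comp]) simp
  have S_m[measurable]: "S k \<in> borel_measurable P" for k unfolding S_def by measurable
  have A_m[measurable]: "A k \<in> sets P" for k unfolding A_def by measurable
  have pw: "delay \<alpha> F0 T \<omega> \<le> ennreal (real K0) + (\<Sum>j. indicator (A (K0 + j)) \<omega>)"
    if \<omega>: "\<omega> \<in> space P" for \<omega>
  proof (cases "\<exists>j. \<omega> \<notin> A (K0 + j)")
    case True
    define j0 where "j0 = (LEAST j. \<omega> \<notin> A (K0 + j))"
    have j0: "\<omega> \<notin> A (K0 + j0)" unfolding j0_def using True by (metis LeastI)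
    have lt: "\<omega> \<in> A (K0 + j)" if "j < j0" for j using not_less_Least[OF that[unfolded j0_def]] by simp
    have d: "detects \<alpha> F0 \<omega> (T + (K0 + j0))" by (rule det[OF \<omega> j0])
    then have ex: "\<exists>n. detects \<alpha> F0 \<omega> n" by blast
    have "(LEAST n. detects \<alpha> F0 \<omega> n) \<le> T + (K0 + j0)" using d by (rule Least_le)
    then have le: "(LEAST n. detects \<alpha> F0 \<omega> n) - T \<le> K0 + j0" by linarith
    have "delay \<alpha> F0 T \<omega> = ennreal (real ((LEAST n. detects \<alpha> F0 \<omega> n) - T))"
      unfolding delay_def using ex by simp
    also have "\<dots> \<le> ennreal (real (K0 + j0))" by (rule ennreal_leI) (use le in simp)
    also have "\<dots> = ennreal (real K0) + (\<Sum>j<j0. indicator (A (K0 + j)) \<omega>)"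
      using lt by (simp add: ennreal_plus ennreal_of_nat_eq_real_of_nat)
    also have "\<dots> \<le> ennreal (real K0) + (\<Sum>j. indicator (A (K0 + j)) \<omega>)"
      by (intro add_left_mono sum_le_suminf) auto
    finally show ?thesis .
  next
    case False
    then have "(\<Sum>j. indicator (A (K0 + j)) \<omega> :: ennreal) = (\<Sum>j. ennreal 1)" by simp
    also have "\<dots> = top" by (rule summable_iff_suminf_neq_top) (auto simp: summable_const_iff)
    finally show ?thesis by simp
  qed
  define c where "c = \<Delta>\<^sup>2 / 8"
  have c0: "c > 0" using D2 by (simp add: c_def)
  define x where "x = exp (- c)"
  have x01: "0 < x" "x < 1" using c0 by (auto simp: x_def)
  have Ab: "emeasure P (A (K0 + j)) \<le> ennreal (2 * x ^ j)" for j
  proof -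
    define k where "k = K0 + j"
    have k1: "1 \<le> k" using K01 by (simp add: k_def)
    have e0: "0 \<le> real k * g / 2" using g D0 by simp
    have "measure P (A k) \<le> 2 * exp (-2 * (real k * g / 2)\<^sup>2 / real k)"
      using hoeff[OF rd0 rd1 k1 e0, of T x0] unfolding A_def S_def P_def F1_def by simp
    also have "-2 * (real k * g / 2)\<^sup>2 / real k = - (real k * g\<^sup>2 / 2)"
      using k1 by (simp add: power2_eq_square field_simps)
    also have "real k * g\<^sup>2 / 2 \<ge> real j * c"
    proof -
      have "g\<^sup>2 \<ge> (\<Delta>/2)\<^sup>2" using g D0 by (intro power_mono) auto
      then have "g\<^sup>2 / 2 \<ge> c" by (simp add: c_def power_divide)
      moreover have "real k \<ge> real j" by (simp add: k_def)
      ultimately have "real j * c \<le> real k * (g\<^sup>2 / 2)" using c0 by (intro mult_mono) auto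
      then show ?thesis by simp
    qed
    then have "2 * exp (- (real k * g\<^sup>2 / 2)) \<le> 2 * exp (- (real j * c))" by simp
    also have "exp (- (real j * c)) = x ^ j" unfolding x_def by (simp add: exp_of_nat_mult[symmetric])
    finally have "measure P (A k) \<le> 2 * x ^ j" .
    then show ?thesis unfolding k_def by (simp add: PP.emeasure_eq_measure ennreal_leI)
  qed
  have geo: "(\<Sum>j. ennreal (2 * x ^ j)) = ennreal (2 / (1 - x))"
  proof (rule suminf_ennreal_eq)
    have "(\<lambda>i. x ^ i) sums (1 / (1 - x))" by (rule geometric_sums) (use x01 in auto)
    from sums_mult[OF this, of 2] show "(\<lambda>i. 2 * x ^ i) sums (2 / (1 - x))" by simp
  qed (use x01 in auto)
  have xb: "2 / (1 - x) \<le> 2 + 16 / \<Delta>\<^sup>2"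
  proof -
    have "exp c \<ge> 1 + c" by (rule exp_ge_add_one_self)
    then have "x \<le> 1 / (1 + c)" unfolding x_def using c0 by (simp add: exp_minus field_simps)
    then have "1 - x \<ge> c / (1 + c)" using c0 by (simp add: field_simps)
    then have "1 / (1 - x) \<le> 1 / (c / (1 + c))" using c0 x01
      by (intro divide_left_mono) auto
    then have "1 / (1 - x) \<le> (1 + c) / c" by simp
    also have "\<dots> = 1 + 8 / \<Delta>\<^sup>2" using c0 by (simp add: c_def field_simps)
    finally show ?thesis by simp
  qed
  have "(\<integral>\<^sup>+ \<omega>. delay \<alpha> F0 T \<omega> \<partial>P) \<le> (\<integral>\<^sup>+ \<omega>. ennreal (real K0) + (\<Sum>j. indicator (A (K0 + j)) \<omega>) \<partial>P)"
    by (rule nn_integral_mono) (rule pw)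
  also have "\<dots> = ennreal (real K0) + (\<Sum>j. emeasure P (A (K0 + j)))"
    by (simp add: nn_integral_add nn_integral_suminf PP.emeasure_space_1)
  also have "\<dots> \<le> ennreal (real K0) + (\<Sum>j. ennreal (2 * x ^ j))"
    by (intro add_left_mono suminf_le Ab) auto
  also have "\<dots> = ennreal (real K0 + 2 / (1 - x))" unfolding geo using x01 by (simp add: ennreal_plus)
  also have "\<dots> \<le> ennreal (2519 * L / \<Delta>\<^sup>2)"
  proof (rule ennreal_leI)
    have "1 / \<Delta>\<^sup>2 \<ge> 1" using D0 D1 by (simp add: power_le_one)
    then have "3 \<le> 3 * L / \<Delta>\<^sup>2" and "16 / \<Delta>\<^sup>2 \<le> 16 * L / \<Delta>\<^sup>2" using L1 D2
      by (auto simp: field_simps)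
    then show "real K0 + 2 / (1 - x) \<le> 2519 * L / \<Delta>\<^sup>2" proof -
      have "2519 * L / \<Delta>\<^sup>2 = 2500 * L / \<Delta>\<^sup>2 + 3 * L / \<Delta>\<^sup>2 + 16 * L / \<Delta>\<^sup>2"
        by (simp add: field_simps)
      then show ?thesis using K0le xb \<open>3 \<le> 3 * L / \<Delta>\<^sup>2\<close> \<open>16 / \<Delta>\<^sup>2 \<le> 16 * L / \<Delta>\<^sup>2\<close> by linarith
    qed
  qed
  finally have main: "(\<integral>\<^sup>+ \<omega>. delay \<alpha> F0 T \<omega> \<partial>P) \<le> ennreal (2519 * L / \<Delta>\<^sup>2)" .
  show "let \<Delta> = dKS (cdf M1) (cdf M0) in
       (\<integral>\<^sup>+ \<omega>. delay \<alpha> (cdf M0) T \<omega> \<partial>change_law M0 M1 T)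
         \<le> ennreal (2519 * (1 + ln (ln (exp 1 / \<Delta>)) + ln (1 / \<alpha>)) / \<Delta>\<^sup>2)"
    using main unfolding Let_def F0_def F1_def \<Delta>_def P_def L_def by simp
qed

end
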